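(* For every $N\ge1$ and positive integers $n_0,\dots,n_N$, the maximum diversity gain of the $(n_0,\dots,n_N)$ Rayleigh product channel satisfies $$\frac{\tilde n_0\tilde n_1}{2}<d(0)\le\tilde n_0\tilde n_1 .$$
   Context: $\tilde n_0\le\cdots\le\tilde n_N$ is the nondecreasing rearrangement of $(n_0,\dots,n_N)$, $c_i=1-i+\min_{k=1,\dots,N}\lfloor(\sum_{l=0}^{k}\tilde n_l-i)/k\rfloor$ for $i=1,\dots,\tilde n_0$, and $d(0)=\sum_{i=1}^{\tilde n_0}c_i$, which is the maximum diversity gain of the Rayleigh product channel $\mathbf y=\sqrt{\mathsf{SNR}/(n_1\cdots n_N)}\mathbf H_1\cdots\mathbf H_N\mathbf x+\mathbf z$ with independent i.i.d. $\mathcal{CN}(0,1)$ matrices $\mathbf H_i\in\mathbb C^{n_{i-1}\times n_i}$. *)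

theory Defs
  imports Complex_Main
begin

definition ntilde :: "nat \<Rightarrow> (nat \<Rightarrow> nat) \<Rightarrow> nat \<Rightarrow> nat" where
  "ntilde N n l = sort (map n [0..<Suc N]) ! l"

definition cdiv :: "nat \<Rightarrow> (nat \<Rightarrow> nat) \<Rightarrow> nat \<Rightarrow> int" where
  "cdiv N n i = 1 - int i +
     Min ((\<lambda>k. \<lfloor>(real (\<Sum>l=0..k. ntilde N n l) - real i) / real k\<rfloor>) ` {1..N})"

definition d0 :: "nat \<Rightarrow> (nat \<Rightarrow> nat) \<Rightarrow> int" where
  "d0 N n = (\<Sum>i=1..ntilde N n 0. cdiv N n i)"

end

theory Submission
  imports Defs
begin

lemma sumA: "(\<Sum>i=1..m. (c::int) + 1 - 2 * int i) = int m * c - int m * int m"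
  by (induction m) (auto simp: algebra_simps)

lemma sumB: "2 * (\<Sum>i=1..m. (c::int) + 1 - int i) = 2 * int m * (c+1) - int m * (int m + 1)"
  by (induction m) (auto simp: algebra_simps)

theorem corollary3:
  fixes N :: nat and n :: "nat \<Rightarrow> nat"
  assumes "N \<ge> 1"
    and "\<And>i. i \<le> N \<Longrightarrow> n i > 0"
  shows "real (ntilde N n 0 * ntilde N n 1) / 2 < real_of_int (d0 N n)
       \<and> d0 N n \<le> int (ntilde N n 0 * ntilde N n 1)"
proof -
  define L where "L = sort (map n [0..<Suc N])"
  have nt: "\<And>l. ntilde N n l = L ! l" by (simp add: ntilde_def L_def)
  have len: "length L = Suc N" by (simp add: L_def)
  have srt: "sorted L" by (simp add: L_def)
  define a where "a = L ! 0"
  define b where "b = L ! 1"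
  have ab: "a \<le> b" unfolding a_def b_def using srt len assms(1)
    by (intro sorted_nth_mono) auto
  have geb: "\<And>l. 1 \<le> l \<Longrightarrow> l \<le> N \<Longrightarrow> b \<le> L ! l" unfolding b_def using srt len
    by (intro sorted_nth_mono) auto
  have S1: "(\<Sum>l=0..1. L ! l) = a + b" by (simp add: a_def b_def)
  have Sk: "\<And>k. 1 \<le> k \<Longrightarrow> k \<le> N \<Longrightarrow> a + k * b \<le> (\<Sum>l=0..k. L ! l)"
  proof -
    fix k assume k: "1 \<le> k" "k \<le> N"
    have "(\<Sum>l=0..k. L ! l) = L ! 0 + (\<Sum>l=1..k. L ! l)"
      by (simp add: sum.atLeast_Suc_atMost)
    moreover have "(\<Sum>l=1..k. b) \<le> (\<Sum>l=1..k. L ! l)"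
      by (intro sum_mono geb) (use k in auto)
    ultimately show "a + k * b \<le> (\<Sum>l=0..k. L ! l)" by (simp add: a_def mult.commute)
  qed
  define f where "f i = (\<lambda>k. \<lfloor>(real (\<Sum>l=0..k. L ! l) - real i) / real k\<rfloor>)" for i
  have cd: "\<And>i. cdiv N n i = 1 - int i + Min (f i ` {1..N})"
    by (simp add: cdiv_def nt f_def)
  have up: "\<And>i. cdiv N n i \<le> int a + int b + 1 - 2 * int i"
  proof -
    fix i
    have "Min (f i ` {1..N}) \<le> f i 1" using assms(1) by (intro Min_le) auto
    also have "f i 1 = int a + int b - int i" unfolding f_def using S1
      by (metis floor_of_int of_int_diff of_int_of_nat_eq of_nat_add div_by_1 of_nat_1)
    finally show "cdiv N n i \<le> int a + int b + 1 - 2 * int i" using cd by simp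
  qed
  have lo: "\<And>i. i \<le> a \<Longrightarrow> int b + 1 - int i \<le> cdiv N n i"
  proof -
    fix i assume i: "i \<le> a"
    have "int b \<le> Min (f i ` {1..N})"
    proof (subst Min_ge_iff, simp, use assms(1) in simp, intro ballI)
      fix y assume "y \<in> f i ` {1..N}"
      then obtain k where k: "1 \<le> k" "k \<le> N" and y: "y = f i k" by auto
      have "real (a + k * b) \<le> real (\<Sum>l=0..k. L ! l)" using Sk[OF k] by linarith
      moreover have "real i \<le> real a" using i by simp
      ultimately have "real b * real k \<le> real (\<Sum>l=0..k. L ! l) - real i" using i
        by (simp only: of_nat_add of_nat_mult) (smt (verit) of_nat_mono mult.commute)
      hence "real b \<le> (real (\<Sum>l=0..k. L ! l) - real i) / real k"
        using k by (simp add: pos_le_divide_eq)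
      thus "int b \<le> y" unfolding y f_def by (simp add: le_floor_iff)
    qed
    thus "int b + 1 - int i \<le> cdiv N n i" using cd by simp
  qed
  have d: "d0 N n = (\<Sum>i=1..a. cdiv N n i)" by (simp add: d0_def nt a_def)
  have "d0 N n \<le> (\<Sum>i=1..a. int a + int b + 1 - 2 * int i)"
    unfolding d by (intro sum_mono up)
  also have "\<dots> = int a * int b" using sumA[where m=a and c="int a + int b"] by (simp add: algebra_simps)
  finally have U: "d0 N n \<le> int (a * b)" by simp
  have "(\<Sum>i=1..a. int b + 1 - int i) \<le> d0 N n"
    unfolding d by (intro sum_mono lo) auto
  hence "2 * int a * (int b + 1) - int a * (int a + 1) \<le> 2 * d0 N n"
    using sumB[where m=a and c="int b"] by linarith
  moreover have "int a * int a < int a * int b + int a"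
  proof -
    have "0 < a" unfolding a_def
    proof -
      have "L ! 0 \<in> set L" using len by simp
      hence "L ! 0 \<in> n ` {0..N}" unfolding L_def set_sort set_map by auto
      thus "0 < L ! 0" using assms(2) by auto
    qed
    moreover have "int a * int a \<le> int a * int b" using ab by (simp add: mult_left_mono)
    ultimately show ?thesis by linarith
  qed
  ultimately have "int a * int b < 2 * d0 N n" by (simp add: algebra_simps)
  hence "real_of_int (int a * int b) < real_of_int (2 * d0 N n)" by (simp only: of_int_less_iff)
  hence "real a * real b < 2 * real_of_int (d0 N n)" by simp
  hence "real (a * b) / 2 < real_of_int (d0 N n)" by simp
  thus ?thesis using U unfolding nt a_def b_def by blast
qed

end
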